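(* Let $h>0$, $\mathbb{T}:=\{0,h,2h,\ldots\}$, $n\in\mathbb{N}$, and $p_0,\ldots,p_{n-1}\in\mathbb{C}\setminus\{-\tfrac1h\}$; define $p:\mathbb{T}\to\mathbb{C}$ by $p(t)=p_k$ if $\tfrac th\equiv k\pmod n$, $k\in\{0,\ldots,n-1\}$, where $p$ is periodic with period $n$ and not periodic with any smaller period. Consider $$\Delta_h x(t)-p(t)x(t)=0,\qquad t\in\mathbb{T},\qquad(\ast)$$ with $\Delta_hx(t):=\frac{x(t+h)-x(t)}{h}$. Let $e_p(t):=\prod_{j=0}^{t/h-1}(1+hp(jh))$ (empty product $=1$), so $|e_p(nh)|=\prod_{i=0}^{n-1}|1+hp_i|$. For $k\in\{0,\ldots,n-1\}$ let $$S_k:=\sum_{j=1}^{n}\frac{1}{\prod_{i=0}^{j-1}|1+hp_{(k+i)\bmod n}|}.$$ Assume $0<|e_p(nh)|\ne1$. Let $\varepsilon>0$ be fixed and $\phi:\mathbb{T}\to\mathbb{C}$ satisfy $|\Delta_h\phi(t)-p(t)\phi(t)|\le\varepsilon$ for all $t\in\mathbb{T}$. Then: (i) If $|e_p(nh)|>1$, then $\lim_{t\to\infty}\frac{\phi(t)}{e_p(t)}$ exists, and $x(t):=\left(\lim_{s\to\infty}\frac{\phi(s)}{e_p(s)}\right)e_p(t)$ is the unique solution of $(\ast)$ with $|\phi(t)-x(t)|\le K_n\varepsilon$ for all $t\in\mathbb{T}$, where $$K_n:=\frac{h|e_p(nh)|}{-1+|e_p(nh)|}\max\{S_0,S_1,\ldots,S_{n-1}\};$$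 moreover $K_n$ is the minimum Ulam stability constant for $(\ast)$. (ii) If $0<|e_p(nh)|<1$, then any solution $x$ of $(\ast)$ with $|\phi(0)-x(0)|<\varepsilon h\frac{|e_p(nh)|S_0}{1-|e_p(nh)|}$ satisfies $$|\phi(t)-x(t)|<\frac{\varepsilon h|e_p(nh)|}{1-|e_p(nh)|}\max\{S_0,S_1,\ldots,S_{n-1}\}$$ for all $t\in\mathbb{T}$.
   Context: A constant $K>0$ is an Ulam stability constant for $(\ast)$ on $\mathbb{T}$ if for every $\varepsilon>0$ and every $\phi:\mathbb{T}\to\mathbb{C}$ with $|\Delta_h\phi(t)-p(t)\phi(t)|\le\varepsilon$ for all $t\in\mathbb{T}$, there is a solution $x$ of $(\ast)$ with $|\phi(t)-x(t)|\le K\varepsilon$ for all $t\in\mathbb{T}$. "Minimum" means $K_n$ is such a constant and no positive number smaller than $K_n$ is. Explicitly, $S_0=\frac{1}{|1+hp_0|}+\frac{1}{|1+hp_0||1+hp_1|}+\cdots+\frac{1}{|1+hp_0|\cdots|1+hp_{n-1}|}$ and $S_k$ is the analogous sum starting at $p_k$ and cycling through $p_{n-1},p_0,\ldots,p_{k-1}$. *)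

theory Defs
  imports "HOL-Analysis.Analysis"
begin

text \<open>The time scale T = {0, h, 2h, ...} is identified with nat via m \<mapsto> m*h;
  a function on T is a function nat \<Rightarrow> complex (value at t = m*h is f m).
  The coefficients p_0,...,p_{n-1} are given by pc :: nat \<Rightarrow> complex (only pc k, k < n, matter).\<close>

definition pfun :: "nat \<Rightarrow> (nat \<Rightarrow> complex) \<Rightarrow> nat \<Rightarrow> complex" where
  "pfun n pc m = pc (m mod n)"

definition minimal_period :: "nat \<Rightarrow> (nat \<Rightarrow> complex) \<Rightarrow> bool" where
  "minimal_period n f \<longleftrightarrow> n \<ge> 1 \<and> (\<forall>m. f (m + n) = f m) \<and>
     (\<forall>d. 0 < d \<and> d < n \<longrightarrow> \<not> (\<forall>m. f (m + d) = f m))"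

definition delta_h :: "real \<Rightarrow> (nat \<Rightarrow> complex) \<Rightarrow> nat \<Rightarrow> complex" where
  "delta_h h x m = (x (Suc m) - x m) / complex_of_real h"

definition is_solution :: "real \<Rightarrow> nat \<Rightarrow> (nat \<Rightarrow> complex) \<Rightarrow> (nat \<Rightarrow> complex) \<Rightarrow> bool" where
  "is_solution h n pc x \<longleftrightarrow> (\<forall>m. delta_h h x m - pfun n pc m * x m = 0)"

definition e_p :: "real \<Rightarrow> nat \<Rightarrow> (nat \<Rightarrow> complex) \<Rightarrow> nat \<Rightarrow> complex" where
  "e_p h n pc m = (\<Prod>j<m. 1 + complex_of_real h * pfun n pc j)"

definition S_k :: "real \<Rightarrow> nat \<Rightarrow> (nat \<Rightarrow> complex) \<Rightarrow> nat \<Rightarrow> real" where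
  "S_k h n pc k = (\<Sum>j=1..n. 1 / (\<Prod>i<j. cmod (1 + complex_of_real h * pc ((k + i) mod n))))"

definition is_ulam_const :: "real \<Rightarrow> nat \<Rightarrow> (nat \<Rightarrow> complex) \<Rightarrow> real \<Rightarrow> bool" where
  "is_ulam_const h n pc K \<longleftrightarrow> K > 0 \<and>
     (\<forall>\<epsilon>>0. \<forall>\<phi>. (\<forall>m. cmod (delta_h h \<phi> m - pfun n pc m * \<phi> m) \<le> \<epsilon>) \<longrightarrow>
        (\<exists>x. is_solution h n pc x \<and> (\<forall>m. cmod (\<phi> m - x m) \<le> K * \<epsilon>)))"

definition is_min_ulam_const :: "real \<Rightarrow> nat \<Rightarrow> (nat \<Rightarrow> complex) \<Rightarrow> real \<Rightarrow> bool" where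
  "is_min_ulam_const h n pc K \<longleftrightarrow> is_ulam_const h n pc K \<and>
     (\<forall>K'. 0 < K' \<and> K' < K \<longrightarrow> \<not> is_ulam_const h n pc K')"

end

theory Submission imports Defs begin

locale US =
  fixes h :: real and n :: nat and pc :: "nat \<Rightarrow> complex"
  assumes h: "h > 0" and n: "n \<ge> 1" and E0: "0 < cmod (e_p h n pc n)"
begin

definition a where "a m = 1 + complex_of_real h * pfun n pc m"
definition AA where "AA m = cmod (a m)"
definition E where "E = cmod (e_p h n pc n)"
definition S where "S m = S_k h n pc m"
definition P where "P m j = (\<Prod>i<j. AA (m + i))"

lemma pfun_add: "pfun n pc (m + n) = pfun n pc m"
  by (simp add: pfun_def)

lemma pfun_mod: "pfun n pc (m mod n) = pfun n pc m"
  by (simp add: pfun_def)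

lemma a_add: "a (m + n) = a m" by (simp add: a_def pfun_add)
lemma AA_add: "AA (m + n) = AA m" by (simp add: AA_def a_add)
lemma AA_mod: "AA (m mod n) = AA m" by (simp add: AA_def a_def pfun_mod)

lemma e_Suc: "e_p h n pc (Suc m) = e_p h n pc m * a m"
  by (simp add: e_p_def a_def)

lemma E_prod: "E = (\<Prod>i<n. AA i)"
  by (simp add: E_def e_p_def AA_def a_def prod_norm)

lemma E_pos: "E > 0" using E0 by (simp add: E_def)

lemma AA_pos: "AA m > 0"
proof -
  have "(\<Prod>i<n. AA i) \<noteq> 0" using E_pos E_prod by linarith
  hence "AA (m mod n) \<noteq> 0" using n
    by (metis finite_lessThan prod_zero_iff lessThan_iff mod_less_divisor less_le_trans zero_less_one)
  moreover have "AA (m mod n) \<ge> 0" by (simp add: AA_def)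
  ultimately show ?thesis by (simp add: AA_mod)
qed

lemma a_nz: "a m \<noteq> 0" using AA_pos[of m] by (auto simp: AA_def)

lemma E_rot: "(\<Prod>i<n. AA (c + i)) = E"
proof (induction c)
  case 0 then show ?case by (simp add: E_prod)
next
  case (Suc c)
  have "(\<Prod>i<Suc n. AA (c + i)) = AA c * (\<Prod>i<n. AA (Suc c + i))"
    by (subst prod.lessThan_Suc_shift) simp
  moreover have "(\<Prod>i<Suc n. AA (c + i)) = (\<Prod>i<n. AA (c + i)) * AA c"
    using AA_add[of c] by (simp add: add.commute)
  ultimately have "AA c * (\<Prod>i<n. AA (Suc c + i)) = AA c * E" using Suc by simp
  then show ?case using AA_pos[of c] by simp
qed

lemma S_eq: "S m = (\<Sum>j=1..n. 1 / P m j)"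
proof -
  have "\<And>i. cmod (1 + complex_of_real h * pc ((m + i) mod n)) = AA (m + i)"
    by (simp add: AA_def a_def pfun_def)
  then show ?thesis by (simp add: S_def S_k_def P_def)
qed

lemma P_Suc: "P m (Suc j) = AA m * P (Suc m) j"
  unfolding P_def by (subst prod.lessThan_Suc_shift) simp

lemma P_pos: "P m j > 0" unfolding P_def by (intro prod_pos) (simp add: AA_pos)

lemma key: "AA m * S m = 1 - 1 / E + S (Suc m)"
proof -
  have "AA m * S m = (\<Sum>j<n. AA m / P m (Suc j))"
    by (simp add: S_eq sum.atLeast1_atMost_eq sum_distrib_left)
  also have "\<dots> = (\<Sum>j<n. 1 / P (Suc m) j)"
    using AA_pos[of m] by (simp add: P_Suc)
  finally have 1: "AA m * S m = (\<Sum>j<n. 1 / P (Suc m) j)" .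
  have "(\<Sum>j<Suc n. 1 / P (Suc m) j) = 1 / P (Suc m) 0 + S (Suc m)"
    by (subst sum.lessThan_Suc_shift) (simp add: S_eq sum.atLeast1_atMost_eq)
  moreover have "(\<Sum>j<Suc n. 1 / P (Suc m) j) = (\<Sum>j<n. 1 / P (Suc m) j) + 1 / E"
    using E_rot[of "Suc m"] by (simp add: P_def)
  moreover have "P (Suc m) 0 = 1" by (simp add: P_def)
  ultimately show ?thesis using 1 by simp
qed

lemma S_pos: "S m > 0"
  unfolding S_eq using n P_pos by (intro sum_pos) auto

lemma S_mod: "S (m mod n) = S m"
  by (simp add: S_def S_k_def mod_add_left_eq)

lemma Smax: "S m \<le> Max (S ` {..<n})"
proof -
  have "S (m mod n) \<le> Max (S ` {..<n})" using n by (intro Max_ge) auto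
  then show ?thesis by (simp add: S_mod)
qed

lemma Smax_ex: "\<exists>k<n. S k = Max (S ` {..<n})"
proof -
  have "Max (S ` {..<n}) \<in> S ` {..<n}" using n by (intro Max_in) (auto simp: lessThan_empty_iff)
  then show ?thesis by auto
qed

lemma e_0: "e_p h n pc 0 = 1" by (simp add: e_p_def)

lemma e_nz: "e_p h n pc m \<noteq> 0"
  by (induction m) (simp_all only: e_0 e_Suc, simp_all add: a_nz)

lemma e_add: "e_p h n pc (m + n) = e_p h n pc m * e_p h n pc n"
proof (induction m)
  case 0 then show ?case by (simp add: e_0)
next
  case (Suc m)
  have "e_p h n pc (Suc m + n) = e_p h n pc (m + n) * a (m + n)"
    using e_Suc[of "m+n"] by simp
  then show ?case using Suc by (simp add: e_Suc a_add)
qed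

lemma e_mult: "cmod (e_p h n pc (q * n)) = E ^ q"
proof (induction q)
  case 0 then show ?case by (simp add: e_0)
next
  case (Suc q)
  have "e_p h n pc (Suc q * n) = e_p h n pc (q * n) * e_p h n pc n"
    using e_add[of "q*n"] by (simp add: add.commute)
  then show ?case using Suc by (simp add: norm_mult E_def)
qed

lemma sol_form: "is_solution h n pc y \<Longrightarrow> y m = y 0 * e_p h n pc m"
proof (induction m)
  case 0 then show ?case by (simp add: e_p_def)
next
  case (Suc m)
  have "delta_h h y m - pfun n pc m * y m = 0" using Suc.prems by (simp add: is_solution_def)
  hence "y (Suc m) = a m * y m" using h by (simp add: delta_h_def a_def field_simps)
  then show ?case using Suc by (simp add: e_Suc)
qed

lemma sol_e: "is_solution h n pc (\<lambda>m. c * e_p h n pc m)"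
  using h by (simp add: is_solution_def delta_h_def e_Suc a_def field_simps)


lemma a_eq: "\<phi> (Suc m) - a m * \<phi> m = complex_of_real h * (delta_h h \<phi> m - pfun n pc m * \<phi> m)"
  using h by (simp add: delta_h_def a_def field_simps)

lemma sol_step: "is_solution h n pc y \<Longrightarrow> y (Suc m) = a m * y m"
  using a_eq[of y m] by (simp add: is_solution_def)

lemma e_Suc_norm: "cmod (e_p h n pc (Suc m)) = cmod (e_p h n pc m) * AA m"
  by (simp add: e_Suc AA_def norm_mult)

lemma e_norm_pos: "cmod (e_p h n pc m) > 0" using e_nz by simp

lemma unbounded:
  assumes E1: "E > 1" and B: "\<forall>m. cmod (c * e_p h n pc m) \<le> B"
  shows "c = 0"
proof (rule ccontr)
  assume c: "c \<noteq> 0"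
  obtain q where q: "B / cmod c < E ^ q" using real_arch_pow[OF E1] by blast
  have "cmod c * E ^ q \<le> B" using B[rule_format, of "q*n"] by (simp add: norm_mult e_mult)
  hence "E ^ q \<le> B / cmod c" using c by (simp add: field_simps)
  with q show False by simp
qed

end

locale US1 = US +
  assumes E1: "E > 1"
begin

definition D where "D m = h * E / (E - 1) * S m"
definition W where "W m = D m / cmod (e_p h n pc m)"
definition Kc where "Kc = h * E / (E - 1) * Max (S ` {..<n})"

lemma c_pos: "h * E / (E - 1) > 0" using h E1 by simp

lemma D_step: "AA m * D m = h + D (Suc m)"
proof -
  have "AA m * D m = h * E / (E - 1) * (AA m * S m)" by (simp add: D_def)
  also have "\<dots> = h * E / (E - 1) * (1 - 1 / E + S (Suc m))" by (simp add: key)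
  also have "\<dots> = h + D (Suc m)" using E1 by (simp add: D_def field_simps)
  finally show ?thesis .
qed

lemma D_le: "D m \<le> Kc"
  unfolding D_def Kc_def using c_pos Smax[of m] by (intro mult_left_mono) auto

lemma D_pos: "D m > 0" unfolding D_def by (rule mult_pos_pos[OF c_pos S_pos])

lemma W_nonneg: "W m \<ge> 0" unfolding W_def using D_pos[of m] by simp

lemma W_step: "W m - W (Suc m) = h / cmod (e_p h n pc (Suc m))"
proof -
  have "W m = AA m * D m / cmod (e_p h n pc (Suc m))"
    unfolding W_def e_Suc_norm using AA_pos[of m] by simp
  then show ?thesis unfolding W_def D_step by (simp add: add_divide_distrib)
qed

lemma W_mono: "W (m + N) \<le> W m"
proof (induction N)
  case 0 then show ?case by simp
next
  case (Suc N)
  have "W (m + N) - W (Suc (m + N)) \<ge> 0" unfolding W_step using h by simp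
  then show ?case using Suc by simp
qed

lemma W_small: "\<delta> > 0 \<Longrightarrow> \<exists>M. \<forall>m\<ge>M. W m < \<delta>"
proof -
  assume d: "\<delta> > 0"
  obtain q where q: "Kc / \<delta> < E ^ q" using real_arch_pow[OF E1] by blast
  have "W (q * n) \<le> Kc / E ^ q"
    unfolding W_def e_mult using D_le[of "q*n"] E_pos by (simp add: divide_right_mono)
  also have "\<dots> < \<delta>" using q d E_pos by (simp add: field_simps)
  finally have 1: "W (q * n) < \<delta>" .
  show ?thesis
  proof (intro exI allI impI)
    fix m assume "q * n \<le> m"
    then have "W m \<le> W (q * n)" using W_mono[of "q*n" "m - q*n"] by simp
    with 1 show "W m < \<delta>" by simp
  qed
qed

lemma main_i:
  assumes phi: "\<forall>m. cmod (delta_h h \<phi> m - pfun n pc m * \<phi> m) \<le> \<epsilon>"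
  defines "v \<equiv> (\<lambda>m. \<phi> m / e_p h n pc m)"
  shows "convergent v \<and> (\<forall>m. cmod (\<phi> m - lim v * e_p h n pc m) \<le> \<epsilon> * D m)"
proof -
  have eps: "\<epsilon> \<ge> 0" using phi[rule_format, of 0] norm_ge_zero order_trans by blast
  have step: "cmod (v (Suc m) - v m) \<le> \<epsilon> * (W m - W (Suc m))" for m
  proof -
    have "v (Suc m) - v m = (\<phi> (Suc m) - a m * \<phi> m) / e_p h n pc (Suc m)"
      unfolding v_def e_Suc using e_nz[of m] a_nz[of m] by (simp add: field_simps)
    also have "\<dots> = complex_of_real h * (delta_h h \<phi> m - pfun n pc m * \<phi> m) / e_p h n pc (Suc m)"
      by (simp add: a_eq)
    finally have "cmod (v (Suc m) - v m) = h * cmod (delta_h h \<phi> m - pfun n pc m * \<phi> m) / cmod (e_p h n pc (Suc m))"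
      using h by (simp add: norm_mult norm_divide)
    also have "\<dots> \<le> h * \<epsilon> / cmod (e_p h n pc (Suc m))"
      using phi h e_norm_pos[of "Suc m"] by (intro divide_right_mono mult_left_mono) auto
    also have "\<dots> = \<epsilon> * (W m - W (Suc m))" unfolding W_step by simp
    finally show ?thesis .
  qed
  have tel: "cmod (v m - v (m + N)) \<le> \<epsilon> * (W m - W (m + N))" for m N
  proof (induction N)
    case 0 then show ?case by simp
  next
    case (Suc N)
    have "cmod (v m - v (m + Suc N)) \<le> cmod (v m - v (m + N)) + cmod (v (Suc (m + N)) - v (m + N))"
      using norm_triangle_ineq[of "v m - v (m + N)" "v (m + N) - v (Suc (m + N))"]
      by (simp add: norm_minus_commute)
    also have "\<dots> \<le> \<epsilon> * (W m - W (m + N)) + \<epsilon> * (W (m + N) - W (Suc (m + N)))"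
      using Suc step[of "m + N"] by linarith
    finally show ?case by (simp add: algebra_simps)
  qed
  have tel2: "cmod (v m - v m') \<le> \<epsilon> * W m" if "m \<le> m'" for m m'
  proof -
    have "cmod (v m - v (m + (m' - m))) \<le> \<epsilon> * (W m - W (m + (m' - m)))" by (rule tel)
    also have "\<dots> \<le> \<epsilon> * W m" using eps W_nonneg[of "m + (m' - m)"] by (simp add: mult_left_mono)
    finally show ?thesis using that by simp
  qed
  have "Cauchy v"
  proof (rule metric_CauchyI)
    fix d :: real assume d: "d > 0"
    obtain M where M: "\<forall>m\<ge>M. W m < d / (\<epsilon> + 1)" using W_small[of "d / (\<epsilon> + 1)"] d eps by auto
    show "\<exists>M. \<forall>m\<ge>M. \<forall>n\<ge>M. dist (v m) (v n) < d"
    proof (intro exI allI impI)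
      fix m m' assume mM: "M \<le> m" "M \<le> m'"
      have bnd: "\<epsilon> * W k < d" if "k \<ge> M" for k
      proof -
        have "\<epsilon> * W k \<le> (\<epsilon> + 1) * W k" using W_nonneg[of k] by (simp add: mult_right_mono)
        also have "\<dots> < (\<epsilon> + 1) * (d / (\<epsilon> + 1))" using M that eps by (intro mult_strict_left_mono) auto
        also have "\<dots> = d" using eps by simp
        finally show ?thesis .
      qed
      show "dist (v m) (v m') < d"
      proof (cases "m \<le> m'")
        case True then show ?thesis using tel2[of m m'] bnd[of m] mM by (simp add: dist_norm)
      next
        case False then show ?thesis using tel2[of m' m] bnd[of m'] mM by (simp add: dist_norm norm_minus_commute)
      qed
    qed
  qed
  hence conv: "convergent v" by (simp add: Cauchy_convergent_iff)
  hence lim: "v \<longlonglongrightarrow> lim v" by (simp add: convergent_LIMSEQ_iff)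
  have bd: "cmod (v m - lim v) \<le> \<epsilon> * W m" for m
  proof (rule LIMSEQ_le_const2)
    show "(\<lambda>k. cmod (v m - v k)) \<longlonglongrightarrow> cmod (v m - lim v)"
      by (intro tendsto_intros lim)
    show "\<exists>N. \<forall>k\<ge>N. cmod (v m - v k) \<le> \<epsilon> * W m" using tel2 by blast
  qed
  have "cmod (\<phi> m - lim v * e_p h n pc m) \<le> \<epsilon> * D m" for m
  proof -
    have "\<phi> m - lim v * e_p h n pc m = (v m - lim v) * e_p h n pc m"
      unfolding v_def using e_nz[of m] by (simp add: field_simps)
    hence "cmod (\<phi> m - lim v * e_p h n pc m) = cmod (v m - lim v) * cmod (e_p h n pc m)"
      by (simp add: norm_mult)
    also have "\<dots> \<le> \<epsilon> * W m * cmod (e_p h n pc m)"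
      using bd[of m] by (simp add: mult_right_mono)
    also have "\<dots> = \<epsilon> * D m" unfolding W_def using e_norm_pos[of m] by simp
    finally show ?thesis .
  qed
  with conv show ?thesis by blast
qed


end



context US1 begin

lemma Kc_pos: "Kc > 0"
  using D_le[of 0] D_pos[of 0] by simp

lemma ulam: "is_ulam_const h n pc Kc"
  unfolding is_ulam_const_def
proof (intro conjI Kc_pos allI impI)
  fix \<epsilon> :: real and \<phi> assume e: "\<epsilon> > 0" and phi: "\<forall>m. cmod (delta_h h \<phi> m - pfun n pc m * \<phi> m) \<le> \<epsilon>"
  let ?L = "lim (\<lambda>m. \<phi> m / e_p h n pc m)"
  have "\<forall>m. cmod (\<phi> m - ?L * e_p h n pc m) \<le> \<epsilon> * D m" using main_i[OF phi] by blast
  moreover have "\<epsilon> * D m \<le> Kc * \<epsilon>" for m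
    using mult_left_mono[OF D_le[of m], of \<epsilon>] e by (simp add: mult.commute)
  ultimately have "\<forall>m. cmod (\<phi> m - ?L * e_p h n pc m) \<le> Kc * \<epsilon>"
    using order_trans by blast
  then show "\<exists>x. is_solution h n pc x \<and> (\<forall>m. cmod (\<phi> m - x m) \<le> Kc * \<epsilon>)"
    using sol_e by blast
qed

lemma uniq:
  assumes y: "is_solution h n pc y" and yb: "\<forall>m. cmod (\<phi> m - y m) \<le> B"
    and xb: "\<forall>m. cmod (\<phi> m - c * e_p h n pc m) \<le> B"
  shows "y = (\<lambda>m. c * e_p h n pc m)"
proof -
  have "\<forall>m. cmod ((y 0 - c) * e_p h n pc m) \<le> B + B"
  proof
    fix m
    have "(y 0 - c) * e_p h n pc m = (\<phi> m - c * e_p h n pc m) - (\<phi> m - y m)"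
      using sol_form[OF y, of m] by (simp add: algebra_simps)
    hence "cmod ((y 0 - c) * e_p h n pc m) \<le> cmod (\<phi> m - c * e_p h n pc m) + cmod (\<phi> m - y m)"
      by (metis norm_triangle_ineq4)
    then show "cmod ((y 0 - c) * e_p h n pc m) \<le> B + B" using xb[rule_format, of m] yb[rule_format, of m] by linarith
  qed
  hence "y 0 - c = 0" by (rule unbounded[OF E1])
  then show ?thesis proof (intro ext)
    fix m show "y m = c * e_p h n pc m" using sol_form[OF y, of m] \<open>y 0 - c = 0\<close> by simp
  qed
qed

lemma minimal:
  assumes K': "0 < K'" "K' < Kc"
  shows "\<not> is_ulam_const h n pc K'"
proof
  assume U: "is_ulam_const h n pc K'"
  define \<phi> where "\<phi> m = e_p h n pc m * complex_of_real (W m)" for m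
  have phi: "\<forall>m. cmod (delta_h h \<phi> m - pfun n pc m * \<phi> m) \<le> 1"
  proof
    fix m
    have wS: "W (Suc m) = W m - h / cmod (e_p h n pc (Suc m))" using W_step[of m] by linarith
    have "\<phi> (Suc m) - a m * \<phi> m = e_p h n pc (Suc m) * (complex_of_real (W (Suc m)) - complex_of_real (W m))"
      unfolding \<phi>_def e_Suc by (simp add: algebra_simps)
    also have "\<dots> = - e_p h n pc (Suc m) * complex_of_real (h / cmod (e_p h n pc (Suc m)))"
      unfolding wS by (simp add: algebra_simps)
    finally have "cmod (\<phi> (Suc m) - a m * \<phi> m) = h"
      using e_norm_pos[of "Suc m"] h by (simp add: norm_mult norm_divide)
    hence "h * cmod (delta_h h \<phi> m - pfun n pc m * \<phi> m) = h"
      unfolding a_eq using h by (simp add: norm_mult)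
    then show "cmod (delta_h h \<phi> m - pfun n pc m * \<phi> m) \<le> 1" using h by simp
  qed
  have UU: "\<forall>\<epsilon>>0. \<forall>\<phi>. (\<forall>m. cmod (delta_h h \<phi> m - pfun n pc m * \<phi> m) \<le> \<epsilon>) \<longrightarrow>
        (\<exists>x. is_solution h n pc x \<and> (\<forall>m. cmod (\<phi> m - x m) \<le> K' * \<epsilon>))"
    using U unfolding is_ulam_const_def by blast
  obtain y where y: "is_solution h n pc y" and yb: "\<forall>m. cmod (\<phi> m - y m) \<le> K' * 1"
    using UU[rule_format, of 1 \<phi>] phi by auto
  have phib: "cmod (\<phi> m) = D m" for m
    unfolding \<phi>_def W_def using e_norm_pos[of m] D_pos[of m] by (simp add: norm_mult norm_divide)
  have "\<forall>m. cmod (y 0 * e_p h n pc m) \<le> Kc + K'"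
  proof
    fix m
    have "cmod (y 0 * e_p h n pc m) \<le> cmod (\<phi> m) + cmod (\<phi> m - y m)"
      using sol_form[OF y, of m] norm_triangle_ineq4[of "\<phi> m" "\<phi> m - y m"] by simp
    then show "cmod (y 0 * e_p h n pc m) \<le> Kc + K'" using phib[of m] D_le[of m] yb[rule_format, of m] by linarith
  qed
  hence "y 0 = 0" by (rule unbounded[OF E1])
  hence "\<forall>m. y m = 0" using sol_form[OF y] by (metis mult_zero_left)
  obtain k where k: "S k = Max (S ` {..<n})" using Smax_ex by blast
  have "D k = Kc" unfolding D_def Kc_def k ..
  hence "Kc \<le> K'" using yb[rule_format, of k] phib[of k] \<open>\<forall>m. y m = 0\<close> by simp
  with K' show False by simp
qed

end

context US begin

lemma part_ii:
  assumes E1: "E < 1" and x: "is_solution h n pc x"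
    and phi: "\<forall>m. cmod (delta_h h \<phi> m - pfun n pc m * \<phi> m) \<le> \<epsilon>"
    and x0: "cmod (\<phi> 0 - x 0) < \<epsilon> * (h * E / (1 - E) * S 0)"
  shows "cmod (\<phi> m - x m) < \<epsilon> * (h * E / (1 - E) * S m)"
proof (induction m)
  case 0 show ?case using x0 .
next
  case (Suc m)
  let ?C = "\<lambda>m. h * E / (1 - E) * S m"
  have Cstep: "AA m * ?C m + h = ?C (Suc m)"
  proof -
    have "AA m * ?C m = h * E / (1 - E) * (AA m * S m)" by simp
    also have "\<dots> = h * E / (1 - E) * (1 - 1 / E) + ?C (Suc m)" by (simp add: key distrib_left)
    finally have 1: "AA m * ?C m = h * E / (1 - E) * (1 - 1 / E) + ?C (Suc m)" .
    have "h * E / (1 - E) * (1 - 1 / E) = - h" using E1 E_pos by (simp add: field_simps)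
    with 1 show ?thesis by simp
  qed
  have "\<phi> (Suc m) - x (Suc m) = a m * (\<phi> m - x m) + complex_of_real h * (delta_h h \<phi> m - pfun n pc m * \<phi> m)"
    using a_eq[of \<phi> m] sol_step[OF x, of m] by (simp add: algebra_simps)
  hence "cmod (\<phi> (Suc m) - x (Suc m)) \<le> AA m * cmod (\<phi> m - x m) + h * cmod (delta_h h \<phi> m - pfun n pc m * \<phi> m)"
    using h norm_triangle_ineq[of "a m * (\<phi> m - x m)" "complex_of_real h * (delta_h h \<phi> m - pfun n pc m * \<phi> m)"]
    by (simp add: norm_mult AA_def)
  also have "\<dots> < AA m * (\<epsilon> * ?C m) + h * \<epsilon>"
    using Suc AA_pos[of m] phi h by (intro add_less_le_mono mult_strict_left_mono mult_left_mono) auto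
  also have "\<dots> = \<epsilon> * ?C (Suc m)" using Cstep[symmetric] by (simp add: algebra_simps)
  finally show ?case .
qed

lemma S_fun: "S = S_k h n pc" by (rule ext) (simp add: S_def)

end

theorem theorem4p3:
  fixes h \<epsilon> :: real and n :: nat and pc :: "nat \<Rightarrow> complex" and \<phi> :: "nat \<Rightarrow> complex"
  assumes h: "h > 0"
    and n: "n \<ge> 1"
    and pc: "\<forall>k<n. pc k \<noteq> - 1 / complex_of_real h"
    and per: "minimal_period n (pfun n pc)"
    and E0: "0 < cmod (e_p h n pc n)"
    and E1: "cmod (e_p h n pc n) \<noteq> 1"
    and eps: "\<epsilon> > 0"
    and phi: "\<forall>m. cmod (delta_h h \<phi> m - pfun n pc m * \<phi> m) \<le> \<epsilon>"
  shows
    "(cmod (e_p h n pc n) > 1 \<longrightarrow>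
       (let E = cmod (e_p h n pc n);
            K = h * E / (-1 + E) * Max (S_k h n pc ` {..<n});
            L = lim (\<lambda>m. \<phi> m / e_p h n pc m);
            x = (\<lambda>m. L * e_p h n pc m)
        in convergent (\<lambda>m. \<phi> m / e_p h n pc m)
           \<and> is_solution h n pc x
           \<and> (\<forall>m. cmod (\<phi> m - x m) \<le> K * \<epsilon>)
           \<and> (\<forall>y. is_solution h n pc y \<and> (\<forall>m. cmod (\<phi> m - y m) \<le> K * \<epsilon>) \<longrightarrow> y = x)
           \<and> is_min_ulam_const h n pc K))
     \<and> (cmod (e_p h n pc n) < 1 \<longrightarrow>
       (let E = cmod (e_p h n pc n)
        in \<forall>x. is_solution h n pc x \<and>
               cmod (\<phi> 0 - x 0) < \<epsilon> * h * (E * S_k h n pc 0 / (1 - E)) \<longrightarrow>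
               (\<forall>m. cmod (\<phi> m - x m) < \<epsilon> * h * E / (1 - E) * Max (S_k h n pc ` {..<n}))))"
proof -
  interpret US h n pc using h n E0 by unfold_locales
  have Edef: "cmod (e_p h n pc n) = E" by (simp add: E_def)
  have Sf: "S_k h n pc = S" by (simp add: S_fun)
  show ?thesis
  proof (intro conjI impI)
    assume g: "cmod (e_p h n pc n) > 1"
    interpret US1 h n pc using g by unfold_locales (simp add: E_def)
    define L where "L = lim (\<lambda>m. \<phi> m / e_p h n pc m)"
    have K: "h * E / (-1 + E) * Max (S_k h n pc ` {..<n}) = Kc" by (simp add: Kc_def Sf)
    have conv: "convergent (\<lambda>m. \<phi> m / e_p h n pc m)"
      and bd: "\<forall>m. cmod (\<phi> m - L * e_p h n pc m) \<le> \<epsilon> * D m"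
      using main_i[OF phi] unfolding L_def by blast+
    have bound: "\<forall>m. cmod (\<phi> m - L * e_p h n pc m) \<le> Kc * \<epsilon>"
    proof
      fix m
      have "\<epsilon> * D m \<le> Kc * \<epsilon>"
        using mult_left_mono[OF D_le[of m], of \<epsilon>] eps by (simp add: mult.commute)
      then show "cmod (\<phi> m - L * e_p h n pc m) \<le> Kc * \<epsilon>" using bd[rule_format, of m] by linarith
    qed
    have mu: "is_min_ulam_const h n pc Kc"
      unfolding is_min_ulam_const_def using ulam minimal by blast
    show "let E = cmod (e_p h n pc n);
            K = h * E / (-1 + E) * Max (S_k h n pc ` {..<n});
            L = lim (\<lambda>m. \<phi> m / e_p h n pc m);
            x = (\<lambda>m. L * e_p h n pc m)
        in convergent (\<lambda>m. \<phi> m / e_p h n pc m)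
           \<and> is_solution h n pc x
           \<and> (\<forall>m. cmod (\<phi> m - x m) \<le> K * \<epsilon>)
           \<and> (\<forall>y. is_solution h n pc y \<and> (\<forall>m. cmod (\<phi> m - y m) \<le> K * \<epsilon>) \<longrightarrow> y = x)
           \<and> is_min_ulam_const h n pc K"
      unfolding Let_def Edef K L_def[symmetric]
      using conv bound sol_e mu uniq[OF _ _ bound] by blast
  next
    assume g: "cmod (e_p h n pc n) < 1"
    show "let E = cmod (e_p h n pc n)
        in \<forall>x. is_solution h n pc x \<and>
               cmod (\<phi> 0 - x 0) < \<epsilon> * h * (E * S_k h n pc 0 / (1 - E)) \<longrightarrow>
               (\<forall>m. cmod (\<phi> m - x m) < \<epsilon> * h * E / (1 - E) * Max (S_k h n pc ` {..<n}))"
      unfolding Let_def Edef Sf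
    proof (intro allI impI, elim conjE)
      fix x m assume x: "is_solution h n pc x" and x0: "cmod (\<phi> 0 - x 0) < \<epsilon> * h * (E * S 0 / (1 - E))"
      have Eg: "E < 1" using g by (simp add: E_def)
      have "cmod (\<phi> 0 - x 0) < \<epsilon> * (h * E / (1 - E) * S 0)" using x0 by (simp add: field_simps)
      from part_ii[OF Eg x phi this]
      have "cmod (\<phi> m - x m) < \<epsilon> * (h * E / (1 - E) * S m)" .
      also have "\<dots> \<le> \<epsilon> * (h * E / (1 - E) * Max (S ` {..<n}))"
        using Smax[of m] Eg E_pos h eps by (intro mult_left_mono) auto
      finally show "cmod (\<phi> m - x m) < \<epsilon> * h * E / (1 - E) * Max (S ` {..<n})" by (simp add: mult.assoc)
    qed
  qed
qed

end
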